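(* For $w,b\ge0$ with $w+b\ge1$ let $H_{w,b}=H_{w,b}(X,Y)$ be the component of the Hausdorff series $\log(e^Xe^Y)$ of degree $w$ in $X$ and degree $b$ in $Y$ (so $H_{1,0}=X$, $H_{0,1}=Y$, $H_{w,0}=0$ for $w\ge2$, $H_{0,b}=0$ for $b\ge2$). Then for all $w,b\ge0$ with $w+b\ge1$, $$(w+1)H_{w+1,b}=\tfrac12[X,H_{w,b}]+\sum_{r\ge1}\frac{B_{2r}}{(2r)!}\sum[H_{w_1,b_1},[H_{w_2,b_2},[\ldots,[H_{w_{2r},b_{2r}},X]\ldots]]],$$ the inner sum being over all $2r$-tuples of pairs $(w_i,b_i)$ of nonnegative integers with $w_i+b_i\ge1$, $\sum_iw_i=w$, $\sum_ib_i=b$; and for all $w\ge0$, $b\ge1$, $$b\,H_{w+1,b}=-\tfrac12[Y,H_{w+1,b-1}]+\sum_{r\ge1}\frac{B_{2r}}{(2r)!}\sum[H_{w_1,b_1},[H_{w_2,b_2},[\ldots,[H_{w_{2r},b_{2r}},Y]\ldots]]],$$ the inner sum being over all $2r$-tuples of pairs with $w_i+b_i\ge1$, $\sum_iw_i=w+1$, $\sum_ib_i=b-1$. (All sums are finite.)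
   Context: $X,Y$ generate a free Lie algebra over $\mathbb Q$, embedded in the completed free associative algebra $\mathbb Q\langle\langle X,Y\rangle\rangle$, where $\log(e^Xe^Y)$ is a (completed) Lie series. Bernoulli numbers are defined by $t/(e^t-1)=\sum_NB_Nt^N/N!$, so $B_2=1/6$. *)

theory Defs
  imports "HOL-Computational_Algebra.Formal_Power_Series" "HOL-Library.Function_Algebras"
begin

text \<open>Completed free associative algebra Q<<X,Y>>: a series is a function from words
  to rational coefficients. Letters: False = X, True = Y.\<close>

type_synonym ncs = "bool list \<Rightarrow> rat"

definition ncX :: ncs where "ncX = (\<lambda>u. if u = [False] then 1 else 0)"
definition ncY :: ncs where "ncY = (\<lambda>u. if u = [True] then 1 else 0)"
definition ncone :: ncs where "ncone = (\<lambda>u. if u = [] then 1 else 0)"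

definition ncmul :: "ncs \<Rightarrow> ncs \<Rightarrow> ncs" where
  "ncmul f g = (\<lambda>u. \<Sum>i\<le>length u. f (take i u) * g (drop i u))"

definition ncsmult :: "rat \<Rightarrow> ncs \<Rightarrow> ncs" where
  "ncsmult c f = (\<lambda>u. c * f u)"

primrec ncpow :: "ncs \<Rightarrow> nat \<Rightarrow> ncs" where
  "ncpow f 0 = ncone"
| "ncpow f (Suc n) = ncmul f (ncpow f n)"

text \<open>exp f = sum_n f^n/n! (for f without constant term; coefficient of a word u
  only receives contributions from n \<le> length u).\<close>
definition ncexp :: "ncs \<Rightarrow> ncs" where
  "ncexp f = (\<lambda>u. \<Sum>n\<le>length u. ncpow f n u / fact n)"

definition nclog1p :: "ncs \<Rightarrow> ncs" where
  "nclog1p g = (\<lambda>u. \<Sum>n\<in>{1..length u}. (-1) ^ (n + 1) * ncpow g n u / of_nat n)"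

definition hausdorff :: ncs where
  "hausdorff = nclog1p (ncmul (ncexp ncX) (ncexp ncY) - ncone)"

definition H :: "nat \<Rightarrow> nat \<Rightarrow> ncs" where
  "H w b = (\<lambda>u. if length (filter Not u) = w \<and> length (filter id u) = b
                 then hausdorff u else 0)"

definition bracket :: "ncs \<Rightarrow> ncs \<Rightarrow> ncs" where
  "bracket f g = ncmul f g - ncmul g f"

definition bernoulli :: "nat \<Rightarrow> rat" where
  "bernoulli N = fact N * fps_nth (fps_X / (fps_exp 1 - 1)) N"

definition tuples :: "nat \<Rightarrow> nat \<Rightarrow> nat \<Rightarrow> (nat \<times> nat) list set" where
  "tuples r w b = {ps. length ps = 2 * r \<and> (\<forall>p\<in>set ps. fst p + snd p \<ge> 1)
                     \<and> sum_list (map fst ps) = w \<and> sum_list (map snd ps) = b}"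

definition nested :: "(nat \<times> nat) list \<Rightarrow> ncs \<Rightarrow> ncs" where
  "nested ps Z = foldr (\<lambda>p acc. bracket (H (fst p) (snd p)) acc) ps Z"

end

theory Submission
  imports Defs
begin

unbundle fps_syntax


lemma ncmul_Nil[simp]: "ncmul f g [] = f [] * g []"
  by (simp add: ncmul_def)

lemma ncmul_Cons: "ncmul f g (a # u) = f [] * g (a # u) + ncmul (\<lambda>v. f (a # v)) g u"
  unfolding ncmul_def by (simp add: sum.atMost_Suc_shift del: sum.atMost_Suc)

lemma ncmul_lin_left:
  "ncmul (\<lambda>v. c * p v + q v) h u = c * ncmul p h u + ncmul q h u"
  unfolding ncmul_def by (simp add: algebra_simps sum.distrib sum_distrib_left)

lemma ncmul_assoc: "ncmul f (ncmul g h) u = ncmul (ncmul f g) h u"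
proof (induction u arbitrary: f g h)
  case Nil then show ?case by simp
next
  case (Cons a u)
  have e: "(\<lambda>v. ncmul f g (a # v)) = (\<lambda>v. f [] * g (a # v) + ncmul (\<lambda>v. f (a # v)) g v)"
    by (simp add: ncmul_Cons)
  show ?case
    apply (simp add: ncmul_Cons e ncmul_lin_left)
    using Cons.IH[of "\<lambda>v. f (a # v)" g h]
    apply (simp add: algebra_simps)
    done
qed

lemma ncmul_one_left: "ncmul ncone f u = f u"
  unfolding ncmul_def ncone_def
  by (simp add: atMost_atLeast0 sum.atLeast_Suc_atMost)

lemma ncmul_one_right: "ncmul f ncone u = f u"
proof (induction u arbitrary: f)
  case Nil then show ?case by (simp add: ncone_def)
next
  case (Cons a u) then show ?case by (simp add: ncmul_Cons ncone_def)
qed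

lemma ncmul_add_left: "ncmul (\<lambda>v. f v + g v) h u = ncmul f h u + ncmul g h u"
  unfolding ncmul_def by (simp add: algebra_simps sum.distrib)
lemma ncmul_add_right: "ncmul h (\<lambda>v. f v + g v) u = ncmul h f u + ncmul h g u"
  unfolding ncmul_def by (simp add: algebra_simps sum.distrib)

section \<open>The ring type\<close>

typedef nc = "UNIV :: ncs set" by auto
setup_lifting type_definition_nc

instantiation nc :: ring_1
begin
lift_definition zero_nc :: nc is "\<lambda>u. 0" .
lift_definition one_nc :: nc is ncone .
lift_definition plus_nc :: "nc \<Rightarrow> nc \<Rightarrow> nc" is "\<lambda>f g u. f u + g u" .
lift_definition minus_nc :: "nc \<Rightarrow> nc \<Rightarrow> nc" is "\<lambda>f g u. f u - g u" .
lift_definition uminus_nc :: "nc \<Rightarrow> nc" is "\<lambda>f u. - f u" .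
lift_definition times_nc :: "nc \<Rightarrow> nc \<Rightarrow> nc" is ncmul .
instance
proof
  fix a b c :: nc
  show "a * b * c = a * (b * c)" by transfer (simp add: ncmul_assoc fun_eq_iff)
  show "1 * a = a" by transfer (simp add: ncmul_one_left fun_eq_iff)
  show "a * 1 = a" by transfer (simp add: ncmul_one_right fun_eq_iff)
  show "(a + b) * c = a * c + b * c" by transfer (simp add: ncmul_add_left fun_eq_iff)
  show "a * (b + c) = a * b + a * c" by transfer (simp add: ncmul_add_right fun_eq_iff)
  show "a + b + c = a + (b + c)" by transfer (simp add: algebra_simps)
  show "a + b = b + a" by transfer (simp add: algebra_simps)
  show "0 + a = a" by transfer simp
  show "- a + a = 0" by transfer simp
  show "a - b = a + - b" by transfer simp
  show "(0::nc) \<noteq> 1" by transfer (auto simp: ncone_def fun_eq_iff)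
qed
end

abbreviation coef :: "nc \<Rightarrow> ncs" where "coef \<equiv> Rep_nc"

lemma nc_eq_iff: "a = b \<longleftrightarrow> (\<forall>u. coef a u = coef b u)"
  by (metis Rep_nc_inject ext)

lemma coef_0[simp]: "coef 0 u = 0" by transfer simp
lemma coef_1: "coef 1 = ncone" by transfer simp
lemma coef_add[simp]: "coef (a + b) u = coef a u + coef b u" by transfer simp
lemma coef_diff[simp]: "coef (a - b) u = coef a u - coef b u" by transfer simp
lemma coef_uminus[simp]: "coef (- a) u = - coef a u" by transfer simp
lemma coef_mult: "coef (a * b) = ncmul (coef a) (coef b)" by transfer simp
lemma coef_sum[simp]: "coef (sum f A) u = (\<Sum>x\<in>A. coef (f x) u)"
  by (induction A rule: infinite_finite_induct) auto


lift_definition cst :: "rat \<Rightarrow> nc" is "\<lambda>c u. if u = [] then c else 0" .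

lemma ncmul_zero_left: "ncmul (\<lambda>v. 0) f u = 0" by (simp add: ncmul_def)

lemma coef_cst_mult[simp]: "coef (cst c * a) u = c * coef a u"
proof -
  have "ncmul (\<lambda>u. if u = [] then c else 0) f u = c * f u" for f
    by (cases u) (simp_all add: ncmul_Cons ncmul_zero_left)
  then show ?thesis by transfer simp
qed

lemma coef_mult_cst[simp]: "coef (a * cst c) u = coef a u * c"
proof -
  have "ncmul f (\<lambda>u. if u = [] then c else 0) u = f u * c" for f
    by (induction u arbitrary: f) (simp_all add: ncmul_Cons)
  then show ?thesis by transfer simp
qed

lemma cst_commute: "cst c * a = a * cst c"
  by (simp add: nc_eq_iff mult.commute)

lemma coef_cst: "coef (cst c) u = (if u = [] then c else 0)" by transfer simp

lemma cst_mult: "cst (c * d) = cst c * cst d" by (simp add: nc_eq_iff coef_cst)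
lemma cst_add: "cst (c + d) = cst c + cst d" by (simp add: nc_eq_iff coef_cst)
lemma cst_diff: "cst (c - d) = cst c - cst d" by (simp add: nc_eq_iff coef_cst)
lemma cst_uminus: "cst (- c) = - cst c" by (simp add: nc_eq_iff coef_cst)
lemma cst_1[simp]: "cst 1 = 1" by (simp add: nc_eq_iff coef_cst coef_1 ncone_def)
lemma cst_0[simp]: "cst 0 = 0" by (simp add: nc_eq_iff coef_cst)
lemma cst_power: "cst (c ^ n) = cst c ^ n" by (induction n) (simp_all add: cst_mult)
lemma cst_sum: "cst (sum f A) = (\<Sum>x\<in>A. cst (f x))"
  by (induction A rule: infinite_finite_induct) (auto simp: cst_add)
lemma cst_of_nat: "cst (of_nat n) = of_nat n" by (induction n) (simp_all add: cst_add)

lemma cst_cst_mult: "cst c * (cst d * a) = cst (c * d) * a"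
  by (simp add: cst_mult mult.assoc)
lemma cst_mult_left_commute: "a * (cst c * b) = cst c * (a * b)"
  by (metis cst_commute mult.assoc)

definition ordge :: "nc \<Rightarrow> nat \<Rightarrow> bool" where
  "ordge a k \<longleftrightarrow> (\<forall>u. length u < k \<longrightarrow> coef a u = 0)"

lemma ordge_0[simp]: "ordge a 0" by (simp add: ordge_def)
lemma ordge_zero[simp]: "ordge 0 k" by (simp add: ordge_def)
lemma ordge_mono: "ordge a k \<Longrightarrow> m \<le> k \<Longrightarrow> ordge a m" by (simp add: ordge_def)
lemma ordge_add: "ordge a k \<Longrightarrow> ordge b k \<Longrightarrow> ordge (a + b) k" by (simp add: ordge_def)
lemma ordge_diff: "ordge a k \<Longrightarrow> ordge b k \<Longrightarrow> ordge (a - b) k" by (simp add: ordge_def)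
lemma ordge_uminus: "ordge a k \<Longrightarrow> ordge (- a) k" by (simp add: ordge_def)
lemma ordge_cst_mult: "ordge a k \<Longrightarrow> ordge (cst c * a) k" by (simp add: ordge_def)
lemma ordge_sum: "(\<And>x. x \<in> A \<Longrightarrow> ordge (f x) k) \<Longrightarrow> ordge (sum f A) k"
  by (simp add: ordge_def)

lemma ordge_mult:
  assumes A: "ordge a k" and B: "ordge b m" shows "ordge (a * b) (k + m)"
proof (unfold ordge_def, intro allI impI)
  fix u :: "bool list" assume L: "length u < k + m"
  show "coef (a * b) u = 0" unfolding coef_mult ncmul_def
  proof (rule sum.neutral, intro ballI)
    fix i assume "i \<in> {..length u}"
    show "coef a (take i u) * coef b (drop i u) = 0"
    proof (cases "length (take i u) < k")
      case True then show ?thesis using A by (simp add: ordge_def)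
    next
      case False then have "length (drop i u) < m" using L by simp
      then show ?thesis using B by (simp add: ordge_def)
    qed
  qed
qed

lemma ordge_power: "ordge a 1 \<Longrightarrow> ordge (a ^ n) n"
proof (induction n)
  case (Suc n) then show ?case using ordge_mult[of a 1 "a^n" n] by simp
qed simp

section \<open>Infinite sums\<close>

lift_definition isum :: "(nat \<Rightarrow> nc) \<Rightarrow> nc" is
  "\<lambda>a u. \<Sum>n\<le>length u. Rep_nc (a n) u" .

definition summ :: "(nat \<Rightarrow> nc) \<Rightarrow> bool" where
  "summ a \<longleftrightarrow> (\<forall>n. ordge (a n) n)"

lemma coef_isum: "coef (isum a) u = (\<Sum>n\<le>length u. coef (a n) u)"
  by transfer simp

lemma coef_isum_N:
  assumes "summ a" "length u \<le> N"
  shows "coef (isum a) u = (\<Sum>n\<le>N. coef (a n) u)"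
  unfolding coef_isum
  by (rule sum.mono_neutral_left) (use assms in \<open>auto simp: summ_def ordge_def\<close>)

lemma isum_add: "isum (\<lambda>n. a n + b n) = isum a + isum b"
  by (simp add: nc_eq_iff coef_isum sum.distrib)
lemma isum_diff: "isum (\<lambda>n. a n - b n) = isum a - isum b"
  by (simp add: nc_eq_iff coef_isum sum_subtractf)
lemma isum_uminus: "isum (\<lambda>n. - a n) = - isum a"
  by (simp add: nc_eq_iff coef_isum sum_negf)
lemma isum_cst: "isum (\<lambda>n. cst c * a n) = cst c * isum a"
  by (simp add: nc_eq_iff coef_isum sum_distrib_left)
lemma isum_zero: "isum (\<lambda>n. 0) = 0"
  by (simp add: nc_eq_iff coef_isum)
lemma isum_sum: "isum (\<lambda>n. \<Sum>x\<in>A. f x n) = (\<Sum>x\<in>A. isum (f x))"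
  by (simp add: nc_eq_iff coef_isum sum.swap[of _ A])

lemma summ_add: "summ a \<Longrightarrow> summ b \<Longrightarrow> summ (\<lambda>n. a n + b n)"
  by (simp add: summ_def ordge_add)
lemma summ_mult_left: "summ a \<Longrightarrow> summ (\<lambda>n. c * a n)"
  unfolding summ_def using ordge_mult[of c 0] by simp
lemma summ_mult_right: "summ a \<Longrightarrow> summ (\<lambda>n. a n * c)"
  unfolding summ_def using ordge_mult[of _ _ c 0] by simp

lemma ordge_isum: "summ a \<Longrightarrow> (\<And>n. ordge (a n) k) \<Longrightarrow> ordge (isum a) k"
  unfolding ordge_def coef_isum by simp

lemma isum_mult_left:
  assumes "summ a" shows "c * isum a = isum (\<lambda>n. c * a n)"
proof (subst nc_eq_iff, intro allI)
  fix u :: "bool list"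
  have "coef (c * isum a) u = (\<Sum>i\<le>length u. coef c (take i u) * coef (isum a) (drop i u))"
    by (simp add: coef_mult ncmul_def)
  also have "\<dots> = (\<Sum>i\<le>length u. coef c (take i u) * (\<Sum>n\<le>length u. coef (a n) (drop i u)))"
    by (intro sum.cong refl) (simp add: coef_isum_N[OF assms, of _ "length u"])
  also have "\<dots> = (\<Sum>n\<le>length u. coef (c * a n) u)"
    by (simp add: coef_mult ncmul_def sum_distrib_left) (rule sum.swap)
  also have "\<dots> = coef (isum (\<lambda>n. c * a n)) u" by (simp add: coef_isum)
  finally show "coef (c * isum a) u = coef (isum (\<lambda>n. c * a n)) u" .
qed

lemma isum_mult_right:
  assumes "summ a" shows "isum a * c = isum (\<lambda>n. a n * c)"
proof (subst nc_eq_iff, intro allI)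
  fix u :: "bool list"
  have "coef (isum a * c) u = (\<Sum>i\<le>length u. coef (isum a) (take i u) * coef c (drop i u))"
    by (simp add: coef_mult ncmul_def)
  also have "\<dots> = (\<Sum>i\<le>length u. (\<Sum>n\<le>length u. coef (a n) (take i u)) * coef c (drop i u))"
    by (intro sum.cong refl) (simp add: coef_isum_N[OF assms, of _ "length u"])
  also have "\<dots> = (\<Sum>n\<le>length u. coef (a n * c) u)"
    by (simp add: coef_mult ncmul_def sum_distrib_right) (rule sum.swap)
  also have "\<dots> = coef (isum (\<lambda>n. a n * c)) u" by (simp add: coef_isum)
  finally show "coef (isum a * c) u = coef (isum (\<lambda>n. a n * c)) u" .
qed

lemma isum_cauchy:
  assumes "\<And>j k. ordge (c j k) (j + k)"
  shows "isum (\<lambda>j. isum (\<lambda>k. c j k)) = isum (\<lambda>n. \<Sum>j\<le>n. c j (n - j))"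
proof (subst nc_eq_iff, intro allI)
  fix u :: "bool list"
  define N where "N = length u"
  have s1: "summ (c j)" for j unfolding summ_def by (metis assms ordge_mono le_add2)
  have s2: "summ (\<lambda>n. \<Sum>j\<le>n. c j (n - j))" unfolding summ_def
    by (auto intro!: ordge_sum) (metis assms le_add_diff_inverse)
  have s0: "summ (\<lambda>j. isum (c j))"
  proof (unfold summ_def, intro allI ordge_isum s1)
    fix j k show "ordge (c j k) j" by (rule ordge_mono[OF assms]) simp
  qed
  have "coef (isum (\<lambda>j. isum (\<lambda>k. c j k))) u = (\<Sum>j\<le>N. \<Sum>k\<le>N. coef (c j k) u)"
    unfolding N_def coef_isum by simp
  also have "\<dots> = (\<Sum>(j,k)\<in>{..N}\<times>{..N}. coef (c j k) u)"
    by (simp add: sum.cartesian_product)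
  also have "\<dots> = (\<Sum>(j,k)\<in>{(j,k). j + k \<le> N}. coef (c j k) u)"
  proof (rule sum.mono_neutral_right)
    show "\<forall>i\<in>{..N} \<times> {..N} - {(j, k). j + k \<le> N}. (case i of (j, k) \<Rightarrow> coef (c j k) u) = 0"
    proof
      fix i assume "i \<in> {..N} \<times> {..N} - {(j, k). j + k \<le> N}"
      then obtain j k where "i = (j,k)" "N < j + k" by auto
      then show "(case i of (j, k) \<Rightarrow> coef (c j k) u) = 0"
        using assms[of j k] unfolding ordge_def N_def by simp
    qed
  qed auto
  also have "\<dots> = (\<Sum>n\<le>N. \<Sum>j\<le>n. coef (c j (n - j)) u)"
    by (rule sum.triangle_reindex_eq)
  also have "\<dots> = coef (isum (\<lambda>n. \<Sum>j\<le>n. c j (n - j))) u"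
    unfolding N_def coef_isum by simp
  finally show "coef (isum (\<lambda>j. isum (\<lambda>k. c j k))) u = coef (isum (\<lambda>n. \<Sum>j\<le>n. c j (n - j))) u" .
qed

lemma isum_tri:
  assumes "\<And>k n. n < k \<Longrightarrow> c k n = 0" "\<And>k n. ordge (c k n) n"
  shows "isum (\<lambda>k. isum (\<lambda>n. c k n)) = isum (\<lambda>n. \<Sum>k\<le>n. c k n)"
proof (subst nc_eq_iff, intro allI)
  fix u :: "bool list"
  define N where "N = length u"
  have s1: "summ (c k)" for k unfolding summ_def using assms by auto
  have "coef (isum (\<lambda>k. isum (\<lambda>n. c k n))) u = (\<Sum>k\<le>N. \<Sum>n\<le>N. coef (c k n) u)"
    unfolding N_def coef_isum by simp
  also have "\<dots> = (\<Sum>n\<le>N. \<Sum>k\<le>N. coef (c k n) u)" by (rule sum.swap)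
  also have "\<dots> = (\<Sum>n\<le>N. \<Sum>k\<le>n. coef (c k n) u)"
    by (intro sum.cong refl sum.mono_neutral_right) (auto simp: assms(1))
  also have "\<dots> = coef (isum (\<lambda>n. \<Sum>k\<le>n. c k n)) u"
    unfolding N_def coef_isum by simp
  finally show "coef (isum (\<lambda>k. isum (\<lambda>n. c k n))) u = coef (isum (\<lambda>n. \<Sum>k\<le>n. c k n)) u" .
qed

lemma isum_shift:
  assumes "summ a"
  shows "isum a = a 0 + isum (\<lambda>n. a (Suc n))"
proof (subst nc_eq_iff, intro allI)
  fix u :: "bool list"
  have "coef (isum a) u = (\<Sum>n\<le>Suc (length u). coef (a n) u)"
    by (rule coef_isum_N[OF assms]) simp
  also have "\<dots> = coef (a 0) u + (\<Sum>n\<le>length u. coef (a (Suc n)) u)"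
    by (simp add: sum.atMost_Suc_shift del: sum.atMost_Suc)
  finally show "coef (isum a) u = coef (a 0 + isum (\<lambda>n. a (Suc n))) u"
    by (simp add: coef_isum)
qed

lemma isum_finite:
  assumes "\<And>n. n > N \<Longrightarrow> a n = 0" "summ a"
  shows "isum a = (\<Sum>n\<le>N. a n)"
proof (subst nc_eq_iff, intro allI)
  fix u :: "bool list"
  have "coef (isum a) u = (\<Sum>n\<le>max N (length u). coef (a n) u)"
    by (rule coef_isum_N[OF assms(2)]) simp
  also have "\<dots> = (\<Sum>n\<le>N. coef (a n) u)"
    by (rule sum.mono_neutral_right) (use assms in auto)
  finally show "coef (isum a) u = coef (\<Sum>n\<le>N. a n) u" by simp
qed




section \<open>Substitution of power series\<close>

definition subst :: "rat fps \<Rightarrow> nc \<Rightarrow> nc" where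
  "subst F g = isum (\<lambda>n. cst (F $ n) * g ^ n)"

lemma summ_subst: "ordge g 1 \<Longrightarrow> summ (\<lambda>n. cst (F $ n) * g ^ n)"
  by (simp add: summ_def ordge_cst_mult ordge_power)

lemma subst_add: "subst (F + G) g = subst F g + subst G g"
  by (simp add: subst_def cst_add distrib_right isum_add)

lemma subst_diff: "subst (F - G) g = subst F g - subst G g"
  by (simp add: subst_def cst_diff left_diff_distrib isum_diff)

lemma subst_1: assumes "ordge g 1" shows "subst 1 g = 1"
proof -
  have s: "summ (\<lambda>n. cst (1 $ n) * g ^ n)" by (rule summ_subst[OF assms])
  show ?thesis unfolding subst_def by (subst isum_finite[where N=0, OF _ s]) auto
qed

lemma subst_X: assumes "ordge g 1" shows "subst fps_X g = g"
proof -
  have s: "summ (\<lambda>n. cst (fps_X $ n) * g ^ n)" by (rule summ_subst[OF assms])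
  show ?thesis unfolding subst_def by (subst isum_finite[where N=1, OF _ s]) auto
qed

lemma subst_mult:
  assumes g: "ordge g 1"
  shows "subst (F * G) g = subst F g * subst G g"
proof -
  have "subst F g * subst G g = isum (\<lambda>j. cst (F $ j) * g ^ j * subst G g)"
    unfolding subst_def by (rule isum_mult_right[OF summ_subst[OF g]])
  also have "\<dots> = isum (\<lambda>j. isum (\<lambda>k. cst (F $ j) * g ^ j * (cst (G $ k) * g ^ k)))"
    unfolding subst_def by (subst isum_mult_left[OF summ_subst[OF g]]) (rule refl)
  also have "\<dots> = isum (\<lambda>n. \<Sum>j\<le>n. cst (F $ j) * g ^ j * (cst (G $ (n - j)) * g ^ (n - j)))"
  proof (rule isum_cauchy)
    fix j k
    show "ordge (cst (F $ j) * g ^ j * (cst (G $ k) * g ^ k)) (j + k)"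
      by (intro ordge_mult ordge_cst_mult ordge_power g)
  qed
  also have "\<dots> = isum (\<lambda>n. cst ((F * G) $ n) * g ^ n)"
  proof (rule arg_cong[where f=isum], rule ext)
    fix n
    have "(\<Sum>j\<le>n. cst (F $ j) * g ^ j * (cst (G $ (n - j)) * g ^ (n - j)))
        = (\<Sum>j\<le>n. cst (F $ j * G $ (n - j)) * g ^ n)"
    proof (rule sum.cong[OF refl])
      fix j assume "j \<in> {..n}"
      then have "g ^ j * g ^ (n - j) = g ^ n" by (simp flip: power_add)
      then show "cst (F $ j) * g ^ j * (cst (G $ (n - j)) * g ^ (n - j)) = cst (F $ j * G $ (n - j)) * g ^ n"
        by (simp only: mult.assoc cst_mult_left_commute[of "g ^ j"] cst_mult)
    qed
    also have "\<dots> = cst ((F * G) $ n) * g ^ n"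
      by (simp add: fps_mult_nth atMost_atLeast0 cst_sum sum_distrib_right)
    finally show "(\<Sum>j\<le>n. cst (F $ j) * g ^ j * (cst (G $ (n - j)) * g ^ (n - j))) = cst ((F * G) $ n) * g ^ n" .
  qed
  finally show ?thesis by (simp add: subst_def)
qed

lemma subst_power: "ordge g 1 \<Longrightarrow> subst (F ^ k) g = subst F g ^ k"
  by (induction k) (simp_all add: subst_1 subst_mult)

lemma ordge_subst: "ordge g 1 \<Longrightarrow> L $ 0 = 0 \<Longrightarrow> ordge (subst L g) 1"
  unfolding subst_def
proof (rule ordge_isum[OF summ_subst])
  fix n assume g: "ordge g 1" and L: "L $ 0 = 0"
  show "ordge (cst (L $ n) * g ^ n) 1"
  proof (cases n)
    case 0 then show ?thesis using L by simp
  next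
    case (Suc m)
    have "ordge (cst (L $ n) * g ^ n) n" by (intro ordge_cst_mult ordge_power g)
    then show ?thesis by (rule ordge_mono) (simp add: Suc)
  qed
qed

lemma subst_compose:
  assumes g: "ordge g 1" and L: "L $ 0 = 0"
  shows "subst (F oo L) g = subst F (subst L g)"
proof -
  have h: "ordge (subst L g) 1" by (rule ordge_subst[OF g L])
  have "subst F (subst L g) = isum (\<lambda>k. cst (F $ k) * subst (L ^ k) g)"
    unfolding subst_def[of F] by (simp add: subst_power[OF g])
  also have "\<dots> = isum (\<lambda>k. isum (\<lambda>n. cst (F $ k) * (cst ((L ^ k) $ n) * g ^ n)))"
    unfolding subst_def by (subst isum_mult_left[OF summ_subst[OF g]]) (rule refl)
  also have "\<dots> = isum (\<lambda>n. \<Sum>k\<le>n. cst (F $ k) * (cst ((L ^ k) $ n) * g ^ n))"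
  proof (rule isum_tri)
    fix k n :: nat
    show "n < k \<Longrightarrow> cst (F $ k) * (cst ((L ^ k) $ n) * g ^ n) = 0"
      using startsby_zero_power_prefix[OF L, of k] by simp
    show "ordge (cst (F $ k) * (cst ((L ^ k) $ n) * g ^ n)) n"
      by (intro ordge_cst_mult ordge_power g)
  qed
  also have "\<dots> = isum (\<lambda>n. cst ((F oo L) $ n) * g ^ n)"
    by (simp add: fps_compose_nth atMost_atLeast0 cst_sum sum_distrib_right cst_cst_mult)
  finally show ?thesis by (simp add: subst_def)
qed

definition nexp :: "nc \<Rightarrow> nc" where "nexp a = subst (fps_exp 1) a"

lemma coef_power: "coef (a ^ n) = ncpow (coef a) n"
  by (induction n) (simp_all add: coef_1 coef_mult)

lemma coef_Abs[simp]: "coef (Abs_nc f) = f"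
  by (simp add: Abs_nc_inverse)

lemma Abs_ncexp: "Abs_nc (ncexp f) = nexp (Abs_nc f)"
  by (simp add: nc_eq_iff nexp_def subst_def coef_isum ncexp_def coef_power)

lemma Abs_nclog: "Abs_nc (nclog1p f) = subst (fps_ln 1) (Abs_nc f)"
proof (subst nc_eq_iff, intro allI)
  fix u :: "bool list"
  have "coef (subst (fps_ln 1) (Abs_nc f)) u
      = (\<Sum>n\<le>length u. fps_ln 1 $ n * ncpow f n u)"
    by (simp add: subst_def coef_isum coef_power)
  also have "\<dots> = (\<Sum>n\<in>{1..length u}. fps_ln 1 $ n * ncpow f n u)"
    by (rule sum.mono_neutral_right) (auto simp: fps_ln_nth not_le)
  also have "\<dots> = nclog1p f u"
    unfolding nclog1p_def
  proof (rule sum.cong[OF refl])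
    fix n assume "n \<in> {1..length u}"
    then obtain k where k: "n = Suc k" by (cases n) auto
    have fln: "fps_ln 1 $ n = (-1::rat) ^ (n + 1) / of_nat n"
      unfolding fps_ln_nth k by simp
    show "fps_ln 1 $ n * ncpow f n u = (-1) ^ (n + 1) * ncpow f n u / of_nat n"
      unfolding fln by simp
  qed
  finally show "coef (Abs_nc (nclog1p f)) u = coef (subst (fps_ln 1) (Abs_nc f)) u" by simp
qed

lemma exp_ln: "fps_exp (1::rat) oo fps_ln 1 = 1 + fps_X"
proof -
  have "(fps_exp (1::rat) - 1) oo fps_ln 1 = fps_X"
    using fps_ln_fps_exp_inv[of "1::rat"] fps_inv_right[of "fps_exp (1::rat) - 1"] by simp
  then have "(fps_exp 1 oo fps_ln 1) - 1 = (fps_X::rat fps)" by (simp add: fps_compose_sub_distrib)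
  then show ?thesis by (metis diff_eq_eq add.commute)
qed

lemma nexp_subst_ln:
  assumes "ordge g 1" shows "nexp (subst (fps_ln 1) g) = 1 + g"
  unfolding nexp_def
  by (simp add: subst_compose[OF assms, symmetric] exp_ln subst_add subst_1[OF assms] subst_X[OF assms])

lemma nexp_neg: "nexp (- a) = subst (fps_exp (-1)) a"
proof -
  have "cst (fps_exp 1 $ n) * (- a) ^ n = cst (fps_exp (- 1) $ n) * a ^ n" for n
  proof -
    have c: "cst ((-1) ^ n) = (-1) ^ n" by (simp add: cst_power cst_uminus)
    have "(- a) ^ n = cst ((-1) ^ n) * a ^ n" unfolding c by (rule power_minus)
    then have "cst (fps_exp 1 $ n) * (- a) ^ n = cst (fps_exp 1 $ n * (-1) ^ n) * a ^ n"
      by (simp only: cst_mult mult.assoc)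
    also have "fps_exp 1 $ n * (-1) ^ n = fps_exp (- 1::rat) $ n" by (simp add: field_simps)
    finally show ?thesis .
  qed
  then show ?thesis unfolding nexp_def subst_def by simp
qed

lemma nexp_inv:
  assumes "ordge a 1" shows "nexp (- a) * nexp a = 1" "nexp a * nexp (- a) = 1"
proof -
  have e1: "fps_exp (-1) * fps_exp 1 = (1::rat fps)"
    using fps_exp_add_mult[of "-1::rat" 1] by simp
  have e2: "fps_exp 1 * fps_exp (-1) = (1::rat fps)"
    using fps_exp_add_mult[of "1::rat" "-1"] by simp
  have "nexp (- a) * nexp a = subst (fps_exp (-1) * fps_exp 1) a"
    unfolding nexp_neg unfolding subst_mult[OF assms] nexp_def ..
  also have "\<dots> = 1" unfolding e1 by (rule subst_1[OF assms])
  finally show "nexp (- a) * nexp a = 1" .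
  have "nexp a * nexp (- a) = subst (fps_exp 1 * fps_exp (-1)) a"
    unfolding nexp_neg unfolding subst_mult[OF assms] nexp_def ..
  also have "\<dots> = 1" unfolding e2 by (rule subst_1[OF assms])
  finally show "nexp a * nexp (- a) = 1" .
qed




definition bQ :: "rat fps" where "bQ = Abs_fps (\<lambda>k. 1 / fact (Suc k))"
definition bB :: "rat fps" where "bB = fps_X / (fps_exp 1 - 1)"

lemma bQ0: "bQ $ 0 = 1" by (simp add: bQ_def)

lemma X_bQ: "fps_X * bQ = fps_exp 1 - 1"
proof (rule fps_ext)
  fix n show "(fps_X * bQ) $ n = (fps_exp 1 - 1) $ n"
    by (cases n) (simp_all add: bQ_def fps_X_mult_nth algebra_simps)
qed

lemma bB_eq: "bB = inverse bQ"
proof -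
  have bQne: "bQ \<noteq> 0" using bQ0 by auto
  have ne: "fps_exp 1 - 1 \<noteq> (0::rat fps)"
    unfolding X_bQ[symmetric] using bQne by simp
  have "fps_X = (fps_exp 1 - 1) * inverse bQ"
    unfolding X_bQ[symmetric] mult.assoc by (simp add: inverse_mult_eq_1' bQ0)
  then have "bB = ((fps_exp 1 - 1) * inverse bQ) div (fps_exp 1 - 1)"
    by (simp add: bB_def)
  also have "\<dots> = inverse bQ" using ne by simp
  finally show ?thesis .
qed

lemma bB_bQ: "bB * bQ = 1"
  unfolding bB_eq by (rule inverse_mult_eq_1) (simp add: bQ0)

lemma bernoulli_nth: "bernoulli n / fact n = bB $ n"
  by (simp add: bernoulli_def bB_def)

lemma bern_rec: "(\<Sum>i\<le>n. bernoulli i / fact i * (1 / fact (n - i + 1))) = (if n = 0 then 1 else 0)"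
proof -
  have "(bB * bQ) $ n = (if n = 0 then 1 else 0)" by (simp add: bB_bQ)
  then show ?thesis
    by (simp add: fps_mult_nth bernoulli_nth atMost_atLeast0 bQ_def)
qed

lemma bern_0: "bernoulli 0 = 1"
  using bern_rec[of 0] by simp

lemma bern_1: "bernoulli 1 = -1/2"
  using bern_rec[of 1] by (simp add: bern_0)

definition rfl :: "rat fps \<Rightarrow> rat fps" where "rfl f = f oo (fps_const (-1) * fps_X)"

lemma rfl_nth: "rfl f $ n = (-1) ^ n * f $ n"
  by (simp add: rfl_def fps_compose_linear)

lemma rfl_mult: "rfl (f * g) = rfl f * rfl g"
  unfolding rfl_def by (rule fps_compose_mult_distrib) simp

lemma bern_odd:
  assumes "odd n" "n \<ge> 3" shows "bernoulli n = 0"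
proof -
  define E where "E = fps_exp (1::rat)"
  define E' where "E' = fps_exp (-1::rat)"
  define Q' where "Q' = rfl bQ"
  have EE: "E' * E = 1" unfolding E_def E'_def using fps_exp_add_mult[of "-1::rat" 1] by simp
  have rX: "rfl fps_X = - fps_X" by (simp add: fps_eq_iff rfl_nth fps_X_nth)
  have rE: "rfl E = E'" by (simp add: rfl_def E_def E'_def)
  have r1: "rfl 1 = 1" by (simp add: rfl_def)
  have rsub: "rfl (f - g) = rfl f - rfl g" for f g by (simp add: rfl_def fps_compose_sub_distrib)
  have "rfl (fps_X * bQ) = rfl (E - 1)" by (simp add: X_bQ E_def)
  then have "- fps_X * Q' = E' - 1" by (simp add: rfl_mult rX rE r1 rsub Q'_def)
  then have "- (fps_X * Q') = E' - 1" by simp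
  then have "fps_X * Q' = - (E' - 1)" by (simp add: minus_equation_iff)
  then have h1: "fps_X * Q' = 1 - E'" by simp
  have "fps_X * (E' * bQ) = E' * (E - 1)" by (simp add: X_bQ E_def mult.left_commute)
  also have "\<dots> = 1 - E'" using EE by (simp add: algebra_simps)
  finally have "fps_X * Q' = fps_X * (E' * bQ)" using h1 by simp
  then have Q'eq: "Q' = E' * bQ" by simp
  have "(bB + fps_X) * Q' = E' * (bB * bQ) + fps_X * Q'"
    by (simp add: Q'eq algebra_simps)
  also have "\<dots> = 1" by (simp add: bB_bQ h1)
  finally have a: "(bB + fps_X) * Q' = 1" .
  have b: "rfl bB * Q' = 1" unfolding Q'_def by (simp flip: rfl_mult add: bB_bQ r1)
  have "Q' \<noteq> 0" using a by auto
  with a b have "rfl bB = bB + fps_X" by (metis mult_right_cancel)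
  then have "rfl bB $ n = (bB + fps_X) $ n" by simp
  then have "- bB $ n = bB $ n" using assms by (simp add: rfl_nth fps_X_nth)
  then have "bB $ n = 0" by simp
  then show ?thesis using bernoulli_nth[of n] by simp
qed


section \<open>Derivations\<close>

definition cnt :: "bool \<Rightarrow> bool list \<Rightarrow> nat" where
  "cnt b u = length (filter (\<lambda>x. x = b) u)"

lemma cnt_take_drop: "cnt b (take i u) + cnt b (drop i u) = cnt b u"
  unfolding cnt_def by (metis append_take_drop_id filter_append length_append)

lift_definition dd :: "bool \<Rightarrow> nc \<Rightarrow> nc" is "\<lambda>b f u. of_nat (cnt b u) * f u" .

lemma coef_dd: "coef (dd b x) u = of_nat (cnt b u) * coef x u" by transfer simp

lemma dd_mult: "dd b (x * y) = dd b x * y + x * dd b y"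
proof (subst nc_eq_iff, intro allI)
  fix u :: "bool list"
  have "coef (dd b (x * y)) u = (\<Sum>i\<le>length u. (of_nat (cnt b (take i u)) + of_nat (cnt b (drop i u))) *
           (coef x (take i u) * coef y (drop i u)))"
    by (simp add: coef_dd coef_mult ncmul_def sum_distrib_left) (simp add: cnt_take_drop flip: of_nat_add)
  also have "\<dots> = coef (dd b x * y + x * dd b y) u"
    by (simp add: coef_dd coef_mult ncmul_def algebra_simps sum.distrib)
  finally show "coef (dd b (x * y)) u = coef (dd b x * y + x * dd b y) u" .
qed

lemma dd_add: "dd b (x + y) = dd b x + dd b y" by (simp add: nc_eq_iff coef_dd algebra_simps)
lemma dd_diff: "dd b (x - y) = dd b x - dd b y" by (simp add: nc_eq_iff coef_dd algebra_simps)
lemma dd_uminus: "dd b (- x) = - dd b x" by (simp add: nc_eq_iff coef_dd)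
lemma dd_cst_mult: "dd b (cst c * x) = cst c * dd b x" by (simp add: nc_eq_iff coef_dd)
lemma dd_one: "dd b 1 = 0" by (simp add: nc_eq_iff coef_dd coef_1 ncone_def cnt_def)
lemma dd_zero: "dd b 0 = 0" by (simp add: nc_eq_iff coef_dd)
lemma dd_isum: "dd b (isum a) = isum (\<lambda>n. dd b (a n))"
  by (simp add: nc_eq_iff coef_dd coef_isum sum_distrib_left)
lemma ordge_dd: "ordge x k \<Longrightarrow> ordge (dd b x) k" by (simp add: ordge_def coef_dd)

definition ad :: "nc \<Rightarrow> nc \<Rightarrow> nc" where "ad h x = h * x - x * h"

lemma ordge_ad: "ordge h 1 \<Longrightarrow> ordge x k \<Longrightarrow> ordge (ad h x) (Suc k)"
  unfolding ad_def using ordge_mult[of h 1 x k] ordge_mult[of x k h 1]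
  by (auto intro!: ordge_diff)
lemma ordge_ad0: "ordge x k \<Longrightarrow> ordge (ad h x) k"
  unfolding ad_def using ordge_mult[of h 0 x k] ordge_mult[of x k h 0]
  by (auto intro!: ordge_diff)

lemma ordge_adp: "ordge h 1 \<Longrightarrow> ordge x k \<Longrightarrow> ordge ((ad h ^^ j) x) (k + j)"
  by (induction j) (auto intro: ordge_ad)
lemma ordge_adp0: "ordge x k \<Longrightarrow> ordge ((ad h ^^ j) x) k"
  by (induction j) (auto intro: ordge_ad0)

lemma ad_add: "ad h (x + y) = ad h x + ad h y" by (simp add: ad_def algebra_simps)
lemma ad_diff: "ad h (x - y) = ad h x - ad h y" by (simp add: ad_def algebra_simps)
lemma ad_uminus: "ad h (- x) = - ad h x" by (simp add: ad_def algebra_simps)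
lemma ad_cst_mult: "ad h (cst c * x) = cst c * ad h x"
  by (simp add: ad_def right_diff_distrib mult.assoc cst_mult_left_commute)
lemma ad_zero: "ad h 0 = 0" by (simp add: ad_def)
lemma ad_self: "ad h h = 0" by (simp add: ad_def)
lemma ad_neg: "ad (- h) x = - ad h x" by (simp add: ad_def)

lemma adp_add: "(ad h ^^ j) (x + y) = (ad h ^^ j) x + (ad h ^^ j) y"
  by (induction j) (simp_all add: ad_add)
lemma adp_uminus: "(ad h ^^ j) (- x) = - (ad h ^^ j) x"
  by (induction j) (simp_all add: ad_uminus)
lemma adp_cst_mult: "(ad h ^^ j) (cst c * x) = cst c * (ad h ^^ j) x"
  by (induction j) (simp_all add: ad_cst_mult)
lemma adp_zero: "(ad h ^^ j) 0 = 0"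
  by (induction j) (simp_all add: ad_zero)
lemma adp_neg: "(ad (- h) ^^ j) x = cst ((-1) ^ j) * (ad h ^^ j) x"
  by (induction j) (simp_all add: ad_neg ad_cst_mult cst_mult cst_uminus mult.assoc)

lemma ad_isum: "summ a \<Longrightarrow> ad h (isum a) = isum (\<lambda>n. ad h (a n))"
  unfolding ad_def
  by (simp add: isum_mult_left isum_mult_right isum_diff)

lemma summ_ad: "summ a \<Longrightarrow> summ (\<lambda>n. ad h (a n))"
  by (simp add: summ_def ordge_ad0)

lemma adp_isum: "summ a \<Longrightarrow> (ad h ^^ j) (isum a) = isum (\<lambda>n. (ad h ^^ j) (a n))"
proof (induction j arbitrary: a)
  case 0 then show ?case by simp
next
  case (Suc j)
  have "(ad h ^^ Suc j) (isum a) = (ad h ^^ j) (ad h (isum a))" by (simp only: funpow_Suc_right comp_def)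
  also have "\<dots> = (ad h ^^ j) (isum (\<lambda>n. ad h (a n)))" by (simp add: ad_isum Suc.prems)
  also have "\<dots> = isum (\<lambda>n. (ad h ^^ j) (ad h (a n)))" by (rule Suc.IH[OF summ_ad[OF Suc.prems]])
  finally show ?case by (simp only: funpow_Suc_right comp_def)
qed

section \<open>Derivative of powers\<close>

lemma of_nat_nc: "(of_nat n :: nc) = cst (of_nat n)" by (simp add: cst_of_nat)

lemma dd_power:
  "dd b (h ^ n) = (\<Sum>j<n. of_nat (n choose Suc j) * ((ad h ^^ j) (dd b h) * h ^ (n - Suc j)))"
proof (induction n)
  case 0 then show ?case by (simp add: dd_one)
next
  case (Suc n)
  define A where "A = dd b h"
  define P where "P j = (ad h ^^ j) A" for j
  define c where "c j = (of_nat (n choose Suc j) :: nc)" for j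
  have cc: "c j * x = x * c j" for j x by (simp add: c_def mult_of_nat_commute)
  have hP: "h * P j = P (Suc j) + P j * h" for j by (simp add: P_def ad_def)
  have IH: "dd b (h ^ n) = (\<Sum>j<n. c j * (P j * h ^ (n - Suc j)))"
    using Suc.IH by (simp add: A_def P_def c_def)
  have "dd b (h ^ Suc n) = A * h ^ n + h * dd b (h ^ n)" by (simp add: dd_mult A_def)
  also have "h * dd b (h ^ n) = (\<Sum>j<n. c j * (P (Suc j) * h ^ (n - Suc j))) + (\<Sum>j<n. c j * (P j * h ^ (n - j)))"
  proof -
    have "h * dd b (h ^ n) = (\<Sum>j<n. c j * (h * P j * h ^ (n - Suc j)))"
      unfolding IH sum_distrib_left by (intro sum.cong refl) (metis cc mult.assoc)
    also have "\<dots> = (\<Sum>j<n. c j * (P (Suc j) * h ^ (n - Suc j)) + c j * (P j * h ^ (n - j)))"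
    proof (intro sum.cong refl)
      fix j assume "j \<in> {..<n}"
      then have "h * h ^ (n - Suc j) = h ^ (n - j)" by (simp flip: power_Suc add: Suc_diff_Suc)
      then show "c j * (h * P j * h ^ (n - Suc j)) = c j * (P (Suc j) * h ^ (n - Suc j)) + c j * (P j * h ^ (n - j))"
        by (simp add: hP algebra_simps)
    qed
    finally show ?thesis by (simp add: sum.distrib)
  qed
  also have "A * h ^ n + ((\<Sum>j<n. c j * (P (Suc j) * h ^ (n - Suc j))) + (\<Sum>j<n. c j * (P j * h ^ (n - j))))
      = (\<Sum>j<Suc n. of_nat (n choose j) * (P j * h ^ (n - j))) + (\<Sum>j<Suc n. of_nat (n choose Suc j) * (P j * h ^ (n - j)))"
  proof -
    have S1: "(\<Sum>j<Suc n. of_nat (n choose j) * (P j * h ^ (n - j))) = A * h ^ n + (\<Sum>j<n. c j * (P (Suc j) * h ^ (n - Suc j)))"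
      by (subst sum.lessThan_Suc_shift) (simp add: c_def P_def)
    have S2: "(\<Sum>j<Suc n. of_nat (n choose Suc j) * (P j * h ^ (n - j))) = (\<Sum>j<n. c j * (P j * h ^ (n - j)))"
      by (simp add: c_def binomial_eq_0)
    show ?thesis unfolding S1 S2 by (simp add: add.assoc)
  qed
  also have "\<dots> = (\<Sum>j<Suc n. of_nat (Suc n choose Suc j) * (P j * h ^ (Suc n - Suc j)))"
    by (simp only: sum.distrib[symmetric] binomial_Suc_Suc of_nat_add distrib_right diff_Suc_Suc)
  finally show ?case by (simp add: P_def A_def)
qed


definition Kop :: "nc \<Rightarrow> nc \<Rightarrow> nc" where
  "Kop h A = isum (\<lambda>j. cst (1 / fact (Suc j)) * (ad h ^^ j) A)"
definition Bop :: "nc \<Rightarrow> nc \<Rightarrow> nc" where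
  "Bop h Z = isum (\<lambda>i. cst (bernoulli i / fact i) * (ad h ^^ i) Z)"

lemma cst_pull: "(cst a * x) * (cst b * y) = cst (a * b) * (x * y)"
  by (simp only: mult.assoc cst_mult_left_commute[of x] cst_mult)

lemma nexp_isum: "nexp h = isum (\<lambda>n. cst (1 / fact n) * h ^ n)"
  by (simp add: nexp_def subst_def)

lemma summ_adp: "ordge h 1 \<Longrightarrow> summ (\<lambda>j. cst (f j) * (ad h ^^ j) A)"
  unfolding summ_def using ordge_adp[of h A 0] by (simp add: ordge_cst_mult)

lemma dd_nexp:
  assumes h: "ordge h 1" shows "dd b (nexp h) = Kop h (dd b h) * nexp h"
proof -
  define A where "A = dd b h"
  define P where "P j = (ad h ^^ j) A" for j
  have sP: "ordge (P j) j" for j using ordge_adp[OF h, of A 0 j] by (simp add: P_def)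
  have s1: "summ (\<lambda>n. cst (1 / fact n) * dd b (h ^ n))"
    unfolding summ_def by (intro allI ordge_cst_mult ordge_dd ordge_power h)
  have "dd b (nexp h) = isum (\<lambda>n. cst (1 / fact n) * dd b (h ^ n))"
    by (simp add: nexp_isum dd_isum dd_cst_mult)
  also have "\<dots> = isum (\<lambda>m. cst (1 / fact (Suc m)) * dd b (h ^ Suc m))"
    by (subst isum_shift[OF s1]) (simp add: dd_one)
  also have "\<dots> = isum (\<lambda>m. \<Sum>j\<le>m. (cst (1 / fact (Suc j)) * P j) * (cst (1 / fact (m - j)) * h ^ (m - j)))"
  proof (rule arg_cong[where f=isum], rule ext)
    fix m
    have "cst (1 / fact (Suc m)) * dd b (h ^ Suc m)
        = (\<Sum>j<Suc m. cst (1 / fact (Suc m) * of_nat (Suc m choose Suc j)) * (P j * h ^ (m - j)))"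
      unfolding dd_power sum_distrib_left
      by (intro sum.cong refl) (simp only: A_def P_def of_nat_nc cst_mult mult.assoc diff_Suc_Suc)
    also have "\<dots> = (\<Sum>j\<le>m. (cst (1 / fact (Suc j)) * P j) * (cst (1 / fact (m - j)) * h ^ (m - j)))"
      unfolding lessThan_Suc_atMost cst_pull
    proof (intro sum.cong refl)
      fix j assume "j \<in> {..m}"
      then have "j \<le> m" by simp
      then have bf: "of_nat (Suc m choose Suc j) = (fact (Suc m) / (fact (Suc j) * fact (m - j)) :: rat)"
        using binomial_fact[of "Suc j" "Suc m"] by simp
      have "fact (Suc m) \<noteq> (0::rat)" by simp
      then have "1 / fact (Suc m) * of_nat (Suc m choose Suc j) = (1 / fact (Suc j) * (1 / fact (m - j)) :: rat)"
        unfolding bf by (simp del: fact_Suc)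
      then show "cst (1 / fact (Suc m) * of_nat (Suc m choose Suc j)) * (P j * h ^ (m - j)) =
          cst (1 / fact (Suc j) * (1 / fact (m - j))) * (P j * h ^ (m - j))" by simp
    qed
    finally show "cst (1 / fact (Suc m)) * dd b (h ^ Suc m) =
        (\<Sum>j\<le>m. (cst (1 / fact (Suc j)) * P j) * (cst (1 / fact (m - j)) * h ^ (m - j)))" .
  qed
  also have "\<dots> = isum (\<lambda>j. isum (\<lambda>k. (cst (1 / fact (Suc j)) * P j) * (cst (1 / fact k) * h ^ k)))"
    by (rule isum_cauchy[symmetric]) (intro ordge_mult ordge_cst_mult ordge_power h sP)
  also have "\<dots> = isum (\<lambda>j. (cst (1 / fact (Suc j)) * P j) * nexp h)"
    unfolding nexp_isum
    by (subst isum_mult_left[OF summ_subst[OF h, of "fps_exp 1"], simplified]) simp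
  also have "\<dots> = Kop h A * nexp h"
    unfolding Kop_def P_def by (rule isum_mult_right[symmetric, OF summ_adp[OF h]])
  finally show ?thesis by (simp add: A_def)
qed

lemma Bop_Kop:
  assumes h: "ordge h 1" shows "Bop h (Kop h A) = A"
proof -
  define P where "P n = (ad h ^^ n) A" for n
  have sP: "ordge (P n) n" for n using ordge_adp[OF h, of A 0 n] by (simp add: P_def)
  have sK: "summ (\<lambda>k. cst (1 / fact (Suc k)) * P k)"
    unfolding P_def by (rule summ_adp[OF h])
  have sKi: "summ (\<lambda>k. cst (1 / fact (Suc k)) * P (i + k))" for i
    unfolding summ_def using sP ordge_mono by (metis le_add2 ordge_cst_mult)
  have adK: "(ad h ^^ i) (Kop h A) = isum (\<lambda>k. cst (1 / fact (Suc k)) * P (i + k))" for i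
    unfolding Kop_def adp_isum[OF sK[unfolded P_def]]
    by (simp add: adp_cst_mult P_def funpow_add)
  have "Bop h (Kop h A) = isum (\<lambda>i. isum (\<lambda>k. cst (bernoulli i / fact i) * (cst (1 / fact (Suc k)) * P (i + k))))"
    unfolding Bop_def adK by (rule arg_cong[where f=isum], rule ext, rule isum_mult_left[OF sKi])
  also have "\<dots> = isum (\<lambda>n. \<Sum>i\<le>n. cst (bernoulli i / fact i) * (cst (1 / fact (Suc (n - i))) * P (i + (n - i))))"
    by (rule isum_cauchy) (intro ordge_cst_mult sP)
  also have "\<dots> = isum (\<lambda>n. cst (if n = 0 then 1 else 0) * P n)"
  proof (rule arg_cong[where f=isum], rule ext)
    fix n
    have "(\<Sum>i\<le>n. cst (bernoulli i / fact i) * (cst (1 / fact (Suc (n - i))) * P (i + (n - i))))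
        = (\<Sum>i\<le>n. cst (bernoulli i / fact i * (1 / fact (n - i + 1))) * P n)"
    proof (intro sum.cong refl)
      fix i assume "i \<in> {..n}" then have "i + (n - i) = n" "Suc (n - i) = n - i + 1" by auto
      then show "cst (bernoulli i / fact i) * (cst (1 / fact (Suc (n - i))) * P (i + (n - i)))
          = cst (bernoulli i / fact i * (1 / fact (n - i + 1))) * P n"
        by (simp only: cst_mult mult.assoc)
    qed
    also have "\<dots> = cst (if n = 0 then 1 else 0) * P n"
      by (simp only: bern_rec flip: sum_distrib_right cst_sum)
    finally show "(\<Sum>i\<le>n. cst (bernoulli i / fact i) * (cst (1 / fact (Suc (n - i))) * P (i + (n - i))))
        = cst (if n = 0 then 1 else 0) * P n" .
  qed
  also have "\<dots> = A"
    by (subst isum_finite[where N=0]) (auto simp: summ_def sP ordge_cst_mult P_def)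
  finally show ?thesis .
qed


definition xX :: nc where "xX = Abs_nc ncX"
definition xY :: nc where "xY = Abs_nc ncY"
definition hH :: nc where "hH = Abs_nc hausdorff"

lemma coef_xX: "coef xX u = (if u = [False] then 1 else 0)" by (simp add: xX_def ncX_def)
lemma coef_xY: "coef xY u = (if u = [True] then 1 else 0)" by (simp add: xY_def ncY_def)

lemma ordge_xX: "ordge xX 1" by (simp add: ordge_def coef_xX)
lemma ordge_xY: "ordge xY 1" by (simp add: ordge_def coef_xY)

lemma dd_xX: "dd False xX = xX" "dd True xX = 0"
  by (simp_all add: nc_eq_iff coef_dd coef_xX cnt_def)
lemma dd_xY: "dd False xY = 0" "dd True xY = xY"
  by (simp_all add: nc_eq_iff coef_dd coef_xY cnt_def)

lemma Kop_zero: "Kop h 0 = 0"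
  by (simp add: Kop_def adp_zero isum_zero)

lemma Kop_uminus: "Kop h (- A) = - Kop h A"
  by (simp add: Kop_def adp_uminus isum_uminus)

lemma Kop_self: "ordge h 1 \<Longrightarrow> Kop h h = h"
proof -
  assume h: "ordge h 1"
  have z: "(ad h ^^ Suc j) h = 0" for j
    by (induction j) (simp_all add: ad_self ad_zero)
  have "Kop h h = (\<Sum>n\<le>0. cst (1 / fact (Suc n)) * (ad h ^^ n) h)"
    unfolding Kop_def
  proof (rule isum_finite)
    show "summ (\<lambda>n. cst (1 / fact (Suc n)) * (ad h ^^ n) h)" by (rule summ_adp[OF h])
    fix n :: nat assume "0 < n" then show "cst (1 / fact (Suc n)) * (ad h ^^ n) h = 0"
      using z[of "n - 1"] by simp
  qed
  then show ?thesis by simp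
qed

lemma coef_nexp_Nil: "coef (nexp a) [] = 1"
  by (simp add: nexp_isum coef_isum coef_1 ncone_def)

lemma nexp_commute: "ordge a 1 \<Longrightarrow> a * nexp a = nexp a * a"
  unfolding nexp_isum
  by (simp add: isum_mult_left isum_mult_right summ_subst[of a "fps_exp 1", simplified]
      mult.assoc cst_mult_left_commute power_commutes)

lemma dd_nexp_xX: "dd False (nexp xX) = xX * nexp xX" "dd True (nexp xX) = 0"
  by (simp_all add: dd_nexp[OF ordge_xX] dd_xX Kop_self[OF ordge_xX] Kop_zero)

lemma dd_nexp_xY: "dd False (nexp xY) = 0" "dd True (nexp xY) = nexp xY * xY"
  by (simp_all add: dd_nexp[OF ordge_xY] dd_xY Kop_self[OF ordge_xY] Kop_zero nexp_commute[OF ordge_xY])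

definition GG :: nc where "GG = nexp xX * nexp xY - 1"

lemma ordge_GG: "ordge GG 1"
  by (simp add: ordge_def GG_def coef_mult coef_nexp_Nil coef_1 ncone_def)

lemma hH_subst: "hH = subst (fps_ln 1) GG"
proof -
  have cX: "coef (nexp xX) = ncexp ncX" by (metis Abs_ncexp coef_Abs xX_def)
  have cY: "coef (nexp xY) = ncexp ncY" by (metis Abs_ncexp coef_Abs xY_def)
  have "Abs_nc (ncmul (ncexp ncX) (ncexp ncY) - ncone) = GG"
    by (simp add: nc_eq_iff GG_def coef_mult cX cY coef_1)
  then show ?thesis unfolding hH_def hausdorff_def Abs_nclog by simp
qed

lemma ordge_hH: "ordge hH 1"
  unfolding hH_subst by (rule ordge_subst[OF ordge_GG]) simp

lemma nexp_hH: "nexp hH = nexp xX * nexp xY"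
  by (simp only: hH_subst nexp_subst_ln[OF ordge_GG]) (simp add: GG_def)

lemma cancel_right: "x * nexp hH = y * nexp hH \<Longrightarrow> x = y"
proof -
  assume "x * nexp hH = y * nexp hH"
  then have "x * nexp hH * nexp (- hH) = y * nexp hH * nexp (- hH)" by simp
  then show "x = y" by (simp add: mult.assoc nexp_inv[OF ordge_hH])
qed

theorem dX_hH: "dd False hH = Bop hH xX"
proof -
  have "dd False (nexp hH) = xX * nexp hH"
    unfolding nexp_hH by (simp add: dd_mult dd_nexp_xX dd_nexp_xY mult.assoc)
  then have "Kop hH (dd False hH) * nexp hH = xX * nexp hH"
    by (simp add: dd_nexp[OF ordge_hH])
  then have "Kop hH (dd False hH) = xX" by (rule cancel_right)
  then show ?thesis using Bop_Kop[OF ordge_hH, of "dd False hH"] by simp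
qed

theorem dY_hH: "dd True hH = Bop (- hH) xY"
proof -
  have oh: "ordge (- hH) 1" by (rule ordge_uminus[OF ordge_hH])
  define A where "A = dd True hH"
  have e1: "dd True (nexp hH) = nexp hH * xY"
    unfolding nexp_hH by (simp add: dd_mult dd_nexp_xX dd_nexp_xY mult.assoc)
  have "0 = dd True (nexp (- hH) * nexp hH)" by (simp add: nexp_inv[OF ordge_hH] dd_one)
  also have "\<dots> = - Kop (- hH) A * (nexp (- hH) * nexp hH) + nexp (- hH) * (nexp hH * xY)"
    unfolding dd_mult dd_nexp[OF oh] e1 by (simp add: dd_uminus Kop_uminus A_def mult.assoc)
  also have "\<dots> = - Kop (- hH) A + xY"
    by (simp add: nexp_inv[OF ordge_hH] mult.assoc[symmetric])
  finally have "Kop (- hH) A = xY" by (simp add: eq_neg_iff_add_eq_0 algebra_simps)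
  then show ?thesis using Bop_Kop[OF oh, of A] by (simp add: A_def)
qed


lift_definition cmp :: "nat \<Rightarrow> nat \<Rightarrow> nc \<Rightarrow> nc" is
  "\<lambda>a b f u. if cnt False u = a \<and> cnt True u = b then f u else 0" .

lemma coef_comp: "coef (cmp a b x) u = (if cnt False u = a \<and> cnt True u = b then coef x u else 0)"
  by transfer simp

lemma cnt_len: "cnt False u + cnt True u = length u"
  unfolding cnt_def by (induction u) auto

lemma comp_add: "cmp a b (x + y) = cmp a b x + cmp a b y" by (simp add: nc_eq_iff coef_comp)
lemma comp_diff: "cmp a b (x - y) = cmp a b x - cmp a b y" by (simp add: nc_eq_iff coef_comp)
lemma comp_uminus: "cmp a b (- x) = - cmp a b x" by (simp add: nc_eq_iff coef_comp)
lemma comp_zero: "cmp a b 0 = 0" by (simp add: nc_eq_iff coef_comp)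
lemma comp_cst_mult: "cmp a b (cst c * x) = cst c * cmp a b x" by (simp add: nc_eq_iff coef_comp)
lemma comp_isum: "cmp a b (isum f) = isum (\<lambda>n. cmp a b (f n))"
  unfolding nc_eq_iff by (auto simp: coef_comp coef_isum)
lemma comp_sum: "cmp a b (sum f A) = (\<Sum>x\<in>A. cmp a b (f x))"
  unfolding nc_eq_iff by (auto simp: coef_comp)
lemma ordge_comp: "ordge x k \<Longrightarrow> ordge (cmp a b x) k" by (simp add: ordge_def coef_comp)
lemma comp_vanish: "ordge x (Suc (a + b)) \<Longrightarrow> cmp a b x = 0"
  by (auto simp: nc_eq_iff coef_comp ordge_def simp flip: cnt_len)
lemma comp_ddF: "cmp a b (dd False x) = cst (of_nat a) * cmp a b x"
  by (simp add: nc_eq_iff coef_comp coef_dd)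
lemma comp_ddT: "cmp a b (dd True x) = cst (of_nat b) * cmp a b x"
  by (simp add: nc_eq_iff coef_comp coef_dd)
lemma comp_xX: "cmp a b xX = (if a = 1 \<and> b = 0 then xX else 0)"
  by (auto simp: nc_eq_iff coef_comp coef_xX cnt_def)
lemma comp_xY: "cmp a b xY = (if a = 0 \<and> b = 1 then xY else 0)"
  by (auto simp: nc_eq_iff coef_comp coef_xY cnt_def)
lemma comp_00: "cmp 0 0 hH = 0"
  using comp_vanish[of hH 0 0] ordge_hH by simp

lemma comp_key:
  "(\<Sum>(p,q)\<in>{..a}\<times>{..b}. (if cnt False t = p \<and> cnt True t = q then X else 0) *
        (if cnt False d = a - p \<and> cnt True d = b - q then Y else 0))
   = (if cnt False t + cnt False d = a \<and> cnt True t + cnt True d = b then X * Y else (0::rat))"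
proof -
  define p0 q0 p1 q1 where "p0 = cnt False t" "q0 = cnt True t" "p1 = cnt False d" "q1 = cnt True d"
  have "(\<Sum>(p,q)\<in>{..a}\<times>{..b}. (if cnt False t = p \<and> cnt True t = q then X else 0) *
        (if cnt False d = a - p \<and> cnt True d = b - q then Y else 0))
      = (\<Sum>pq\<in>{..a}\<times>{..b}. if (p0, q0) = pq then (if p1 = a - fst pq \<and> q1 = b - snd pq then X * Y else 0) else 0)"
    by (intro sum.cong refl) (auto simp: p0_q0_p1_q1_def split: if_splits)
  also have "\<dots> = (if (p0, q0) \<in> {..a}\<times>{..b} then (if p1 = a - p0 \<and> q1 = b - q0 then X * Y else 0) else 0)"
    by (subst sum.delta') auto
  also have "\<dots> = (if p0 + p1 = a \<and> q0 + q1 = b then X * Y else 0)" by auto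
  finally show ?thesis by (simp add: p0_q0_p1_q1_def)
qed

lemma comp_mult: "cmp a b (x * y) = (\<Sum>p\<le>a. \<Sum>q\<le>b. cmp p q x * cmp (a - p) (b - q) y)"
proof (subst nc_eq_iff, intro allI)
  fix u :: "bool list"
  have "coef (\<Sum>p\<le>a. \<Sum>q\<le>b. cmp p q x * cmp (a - p) (b - q) y) u
      = (\<Sum>(p,q)\<in>{..a}\<times>{..b}. \<Sum>i\<le>length u. coef (cmp p q x) (take i u) * coef (cmp (a - p) (b - q) y) (drop i u))"
    by (simp add: sum.cartesian_product coef_mult ncmul_def case_prod_unfold)
  also have "\<dots> = (\<Sum>i\<le>length u. \<Sum>(p,q)\<in>{..a}\<times>{..b}. coef (cmp p q x) (take i u) * coef (cmp (a - p) (b - q) y) (drop i u))"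
    by (subst sum.swap) (simp add: case_prod_unfold)
  also have "\<dots> = (\<Sum>i\<le>length u. if cnt False u = a \<and> cnt True u = b then coef x (take i u) * coef y (drop i u) else 0)"
    by (intro sum.cong refl) (simp only: coef_comp comp_key cnt_take_drop)
  also have "\<dots> = coef (cmp a b (x * y)) u"
    by (auto simp: coef_comp coef_mult ncmul_def)
  finally show "coef (cmp a b (x * y)) u = coef (\<Sum>p\<le>a. \<Sum>q\<le>b. cmp p q x * cmp (a - p) (b - q) y) u" by simp
qed


definition SS :: "nat \<Rightarrow> nat \<Rightarrow> nat \<Rightarrow> (nat \<times> nat) list set" where
  "SS j a b = {ps. length ps = j \<and> sum_list (map fst ps) \<le> a \<and> sum_list (map snd ps) \<le> b}"
definition TT :: "nat \<Rightarrow> nat \<Rightarrow> nat \<Rightarrow> (nat \<times> nat) list set" where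
  "TT j a b = {ps. length ps = j \<and> sum_list (map fst ps) = a \<and> sum_list (map snd ps) = b}"
definition nst :: "(nat \<times> nat) list \<Rightarrow> nc \<Rightarrow> nc" where
  "nst ps Z = foldr (\<lambda>p acc. ad (cmp (fst p) (snd p) hH) acc) ps Z"

lemma nst_Nil[simp]: "nst [] Z = Z" by (simp add: nst_def)
lemma nst_Cons[simp]: "nst (p # ps) Z = ad (cmp (fst p) (snd p) hH) (nst ps Z)"
  by (simp add: nst_def)

lemma ad_zero_left: "ad 0 x = 0" by (simp add: ad_def)

lemma nst_zero: "nst ps 0 = 0" by (induction ps) (simp_all add: ad_zero)

lemma nst_00: "(0, 0) \<in> set ps \<Longrightarrow> nst ps Z = 0"
  by (induction ps) (auto simp: comp_00 ad_zero_left ad_zero)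

lemma finite_SS: "finite (SS j a b)"
proof (rule finite_subset)
  show "SS j a b \<subseteq> {ps. set ps \<subseteq> {..a} \<times> {..b} \<and> length ps = j}"
  proof
    fix ps assume "ps \<in> SS j a b"
    then have L: "length ps = j" and A: "sum_list (map fst ps) \<le> a" and B: "sum_list (map snd ps) \<le> b"
      by (auto simp: SS_def)
    have "set ps \<subseteq> {..a} \<times> {..b}"
    proof
      fix x assume x: "x \<in> set ps"
      then have "fst x \<le> sum_list (map fst ps)" "snd x \<le> sum_list (map snd ps)"
        by (auto intro!: member_le_sum_list)
      with A B show "x \<in> {..a} \<times> {..b}" by (cases x) auto
    qed
    with L show "ps \<in> {ps. set ps \<subseteq> {..a} \<times> {..b} \<and> length ps = j}" by simp
  qed
  show "finite {ps. set ps \<subseteq> {..a} \<times> {..b} \<and> length ps = j}"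
    by (rule finite_lists_length_eq) simp
qed

lemma ad_sum: "ad h (sum f A) = (\<Sum>x\<in>A. ad h (f x))"
  by (simp add: ad_def sum_distrib_left sum_distrib_right sum_subtractf)

lemma sum_flip: "(\<Sum>p\<le>a. f (a - p)) = (\<Sum>p\<le>(a::nat). f p)"
  using sum.nat_diff_reindex[of f "Suc a"] by (simp add: lessThan_Suc_atMost)

lemma comp_ad: "cmp a b (ad hH W) = (\<Sum>p\<le>a. \<Sum>q\<le>b. ad (cmp p q hH) (cmp (a - p) (b - q) W))"
proof -
  have flip: "(\<Sum>p\<le>a. \<Sum>q\<le>b. cmp p q W * cmp (a - p) (b - q) hH)
      = (\<Sum>p\<le>a. \<Sum>q\<le>b. cmp (a - p) (b - q) W * cmp p q hH)"
  proof -
    have "(\<Sum>p\<le>a. \<Sum>q\<le>b. cmp p q W * cmp (a - p) (b - q) hH)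
        = (\<Sum>p\<le>a. \<Sum>q\<le>b. cmp (a - p) q W * cmp (a - (a - p)) (b - q) hH)"
      by (rule sum_flip[symmetric, where f = "\<lambda>p. \<Sum>q\<le>b. cmp p q W * cmp (a - p) (b - q) hH"])
    also have "\<dots> = (\<Sum>p\<le>a. \<Sum>q\<le>b. cmp (a - p) (b - q) W * cmp (a - (a - p)) (b - (b - q)) hH)"
    proof (rule sum.cong[OF refl])
      fix p assume "p \<in> {..a}"
      show "(\<Sum>q\<le>b. cmp (a - p) q W * cmp (a - (a - p)) (b - q) hH) =
          (\<Sum>q\<le>b. cmp (a - p) (b - q) W * cmp (a - (a - p)) (b - (b - q)) hH)"
        by (rule sum_flip[symmetric, where f = "\<lambda>q. cmp (a - p) q W * cmp (a - (a - p)) (b - q) hH"])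
    qed
    also have "\<dots> = (\<Sum>p\<le>a. \<Sum>q\<le>b. cmp (a - p) (b - q) W * cmp p q hH)"
      by (intro sum.cong refl) simp
    finally show ?thesis .
  qed
  show ?thesis
    unfolding ad_def comp_diff comp_mult flip
    by (simp add: sum_subtractf)
qed

lemma comp_adp:
  "cmp a b ((ad hH ^^ j) Z) =
     (\<Sum>ps\<in>SS j a b. nst ps (cmp (a - sum_list (map fst ps)) (b - sum_list (map snd ps)) Z))"
proof (induction j arbitrary: a b)
  case 0
  have "SS 0 a b = {[]}" by (auto simp: SS_def)
  then show ?case by simp
next
  case (Suc j)
  define B' where "B' = (\<lambda>pq. SS j (a - fst pq) (b - snd pq))"
  define g where "g ps = nst ps (cmp (a - sum_list (map fst ps)) (b - sum_list (map snd ps)) Z)" for ps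
  have "cmp a b ((ad hH ^^ Suc j) Z) = (\<Sum>p\<le>a. \<Sum>q\<le>b. \<Sum>ps\<in>SS j (a - p) (b - q). g ((p, q) # ps))"
    by (simp add: comp_ad Suc.IH ad_sum g_def diff_diff_left)
  also have "\<dots> = (\<Sum>pq\<in>{..a}\<times>{..b}. \<Sum>ps\<in>B' pq. g (pq # ps))"
    by (simp add: sum.cartesian_product B'_def case_prod_unfold)
  also have "\<dots> = (\<Sum>x\<in>Sigma ({..a}\<times>{..b}) B'. g (fst x # snd x))"
    using sum.Sigma[of "{..a}\<times>{..b}" B' "\<lambda>pq ps. g (pq # ps)"]
    by (simp add: B'_def finite_SS case_prod_unfold)
  also have "\<dots> = (\<Sum>ps\<in>SS (Suc j) a b. g ps)"
  proof (rule sum.reindex_bij_witness[where i = "\<lambda>ps. (hd ps, tl ps)" and j = "\<lambda>x. fst x # snd x"])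
    fix x assume "x \<in> Sigma ({..a}\<times>{..b}) B'"
    then show "(hd (fst x # snd x), tl (fst x # snd x)) = x" "fst x # snd x \<in> SS (Suc j) a b"
      by (auto simp: SS_def B'_def)
  next
    fix ps assume "ps \<in> SS (Suc j) a b"
    then obtain p ps' where ps: "ps = p # ps'" "length ps' = j"
      "fst p + sum_list (map fst ps') \<le> a" "snd p + sum_list (map snd ps') \<le> b"
      by (cases ps) (auto simp: SS_def)
    then show "fst (hd ps, tl ps) # snd (hd ps, tl ps) = ps"
      "(hd ps, tl ps) \<in> Sigma ({..a}\<times>{..b}) B'"
      by (auto simp: SS_def B'_def mem_Times_iff)
  qed simp
  finally show ?case by (simp add: g_def)
qed

lemma nst_fin: "finite (TT j a b)"
  by (rule finite_subset[OF _ finite_SS[of j a b]]) (auto simp: TT_def SS_def)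

lemma comp_adp_X: "cmp (Suc w) b ((ad hH ^^ j) xX) = (\<Sum>ps\<in>TT j w b. nst ps xX)"
proof -
  have "cmp (Suc w) b ((ad hH ^^ j) xX) =
      (\<Sum>ps\<in>SS j (Suc w) b. if sum_list (map fst ps) = w \<and> sum_list (map snd ps) = b then nst ps xX else 0)"
    unfolding comp_adp comp_xX
    by (intro sum.cong refl) (auto simp: nst_zero SS_def)
  also have "\<dots> = (\<Sum>ps\<in>{ps\<in>SS j (Suc w) b. sum_list (map fst ps) = w \<and> sum_list (map snd ps) = b}. nst ps xX)"
    by (simp add: sum.inter_filter finite_SS)
  also have "{ps\<in>SS j (Suc w) b. sum_list (map fst ps) = w \<and> sum_list (map snd ps) = b} = TT j w b"
    by (auto simp: SS_def TT_def)
  finally show ?thesis .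
qed

lemma comp_adp_Y:
  assumes "b \<ge> 1"
  shows "cmp (Suc w) b ((ad hH ^^ j) xY) = (\<Sum>ps\<in>TT j (Suc w) (b - 1). nst ps xY)"
proof -
  have "cmp (Suc w) b ((ad hH ^^ j) xY) =
      (\<Sum>ps\<in>SS j (Suc w) b. if sum_list (map fst ps) = Suc w \<and> sum_list (map snd ps) = b - 1 then nst ps xY else 0)"
    unfolding comp_adp comp_xY
    by (intro sum.cong refl) (use assms in \<open>auto simp: nst_zero SS_def\<close>)
  also have "\<dots> = (\<Sum>ps\<in>{ps\<in>SS j (Suc w) b. sum_list (map fst ps) = Suc w \<and> sum_list (map snd ps) = b - 1}. nst ps xY)"
    by (simp add: sum.inter_filter finite_SS)
  also have "{ps\<in>SS j (Suc w) b. sum_list (map fst ps) = Suc w \<and> sum_list (map snd ps) = b - 1} = TT j (Suc w) (b - 1)"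
    using assms by (auto simp: SS_def TT_def)
  finally show ?thesis .
qed

lemma TT_tuples: "(\<Sum>ps\<in>TT (2 * r) a b. nst ps Z) = (\<Sum>ps\<in>tuples r a b. nst ps Z)"
proof (rule sum.mono_neutral_right)
  show "finite (TT (2 * r) a b)" by (rule nst_fin)
  show "tuples r a b \<subseteq> TT (2 * r) a b" by (auto simp: tuples_def TT_def)
  show "\<forall>ps\<in>TT (2 * r) a b - tuples r a b. nst ps Z = 0"
  proof
    fix ps assume "ps \<in> TT (2 * r) a b - tuples r a b"
    then have "\<not> (\<forall>p\<in>set ps. fst p + snd p \<ge> 1)" by (auto simp: tuples_def TT_def)
    then obtain p where "p \<in> set ps" "fst p + snd p < 1" by (auto simp: not_le)
    then have "p = (0, 0)" by (simp add: prod_eq_iff)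
    with \<open>p \<in> set ps\<close> have "(0, 0) \<in> set ps" by simp
    then show "nst ps Z = 0" by (rule nst_00)
  qed
qed


lemma even_odd_split: "(\<Sum>i\<le>2 * M + 1. f i) = (\<Sum>r\<le>M. f (2 * r)) + (\<Sum>r\<le>M. f (2 * r + 1))"
  for f :: "nat \<Rightarrow> 'a::comm_monoid_add"
proof (induction M)
  case 0 then show ?case by simp
next
  case (Suc M)
  have e: "2 * Suc M + 1 = Suc (Suc (2 * M + 1))" by simp
  show ?case unfolding e sum.atMost_Suc Suc.IH by (simp add: algebra_simps)
qed

lemma assemble:
  fixes f :: "nat \<Rightarrow> nc"
  assumes van: "\<And>i. i > 2 * M + 1 \<Longrightarrow> f i = 0" and s: "summ f"
    and odd0: "\<And>r. r \<in> {1..M} \<Longrightarrow> f (2 * r + 1) = 0"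
  shows "isum f = f 0 + f 1 + (\<Sum>r\<in>{1..M}. f (2 * r))"
proof -
  have "isum f = (\<Sum>i\<le>2 * M + 1. f i)" by (rule isum_finite[OF van s])
  also have "\<dots> = (\<Sum>r\<le>M. f (2 * r)) + (\<Sum>r\<le>M. f (2 * r + 1))" by (rule even_odd_split)
  also have "(\<Sum>r\<le>M. f (2 * r)) = f 0 + (\<Sum>r\<in>{1..M}. f (2 * r))"
    by (simp add: atMost_atLeast0 sum.atLeast_Suc_atMost)
  also have "(\<Sum>r\<le>M. f (2 * r + 1)) = f 1"
  proof -
    have "(\<Sum>r\<le>M. f (2 * r + 1)) = f (2 * 0 + 1) + (\<Sum>r\<in>{1..M}. f (2 * r + 1))"
      by (simp add: atMost_atLeast0 sum.atLeast_Suc_atMost del: mult_0_right)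
    also have "(\<Sum>r\<in>{1..M}. f (2 * r + 1)) = 0" using odd0 by simp
    finally show ?thesis by simp
  qed
  finally show ?thesis by (simp add: algebra_simps)
qed

lemma TT_1: "TT 1 a b = {[(a, b)]}"
proof -
  have "ps \<in> TT 1 a b \<longleftrightarrow> ps = [(a, b)]" for ps
    by (cases ps) (auto simp: TT_def)
  then show ?thesis by blast
qed

lemma TT_Suc0: "TT (Suc 0) a b = {[(a, b)]}" using TT_1 by simp
lemma bern_Suc0: "bernoulli (Suc 0) = -1/2" using bern_1 by simp

lemma TT_0: "TT 0 a b = (if a = 0 \<and> b = 0 then {[]} else {})"
  by (auto simp: TT_def)

lemma ad_anti: "ad x y = - ad y x" by (simp add: ad_def)

lemma X_nc:
  assumes wb: "w + b \<ge> 1"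
  shows "cst (of_nat (w + 1)) * cmp (w + 1) b hH =
    cst (1/2) * ad xX (cmp w b hH) +
    (\<Sum>r\<in>{1..w+b}. cst (bernoulli (2*r) / fact (2*r)) * (\<Sum>ps\<in>tuples r w b. nst ps xX))"
proof -
  define M where "M = w + b"
  define f where "f i = cst (bernoulli i / fact i) * cmp (Suc w) b ((ad hH ^^ i) xX)" for i
  have oa: "ordge ((ad hH ^^ i) xX) (1 + i)" for i by (rule ordge_adp[OF ordge_hH ordge_xX])
  have "cst (of_nat (w + 1)) * cmp (w + 1) b hH = cmp (Suc w) b (dd False hH)"
    by (simp add: comp_ddF)
  also have "\<dots> = isum f"
    unfolding f_def[abs_def] by (simp add: dX_hH Bop_def comp_isum comp_cst_mult)
  also have "\<dots> = f 0 + f 1 + (\<Sum>r\<in>{1..M}. f (2 * r))"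
  proof (rule assemble)
    fix i assume "2 * M + 1 < i"
    then have "Suc (Suc w + b) \<le> 1 + i" using wb by (simp add: M_def)
    then show "f i = 0" unfolding f_def
      by (simp add: comp_vanish[OF ordge_mono[OF oa]])
  next
    show "summ f" unfolding summ_def f_def
      by (intro allI ordge_cst_mult ordge_comp ordge_mono[OF oa]) simp
  next
    fix r assume "r \<in> {1..M}"
    then have "odd (2 * r + 1)" "2 * r + 1 \<ge> 3" by auto
    then show "f (2 * r + 1) = 0" by (simp add: f_def bern_odd)
  qed
  also have "f 0 = 0" using wb by (auto simp: f_def comp_xX)
  also have "f 1 = cst (1/2) * ad xX (cmp w b hH)"
  proof -
    have "f 1 = cst (-1/2) * ad (cmp w b hH) xX"
      using comp_adp_X[of w b 1] by (simp add: f_def TT_Suc0 bern_Suc0)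
    also have "\<dots> = cst (1/2) * ad xX (cmp w b hH)"
      by (simp add: ad_anti[of "cmp w b hH"] cst_uminus)
    finally show ?thesis .
  qed
  also have "(\<Sum>r\<in>{1..M}. f (2 * r)) =
      (\<Sum>r\<in>{1..w+b}. cst (bernoulli (2*r) / fact (2*r)) * (\<Sum>ps\<in>tuples r w b. nst ps xX))"
    by (simp add: f_def M_def comp_adp_X TT_tuples)
  finally show ?thesis by simp
qed

lemma Y_nc:
  assumes b1: "b \<ge> 1"
  shows "cst (of_nat b) * cmp (w + 1) b hH =
    cst (-1/2) * ad xY (cmp (w + 1) (b - 1) hH) +
    (\<Sum>r\<in>{1..w+b}. cst (bernoulli (2*r) / fact (2*r)) * (\<Sum>ps\<in>tuples r (w + 1) (b - 1). nst ps xY))"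
proof -
  define M where "M = w + b"
  define f where "f i = cst (bernoulli i / fact i) * (cst ((-1) ^ i) * cmp (Suc w) b ((ad hH ^^ i) xY))" for i
  have oa: "ordge ((ad hH ^^ i) xY) (1 + i)" for i by (rule ordge_adp[OF ordge_hH ordge_xY])
  have "cst (of_nat b) * cmp (w + 1) b hH = cmp (Suc w) b (dd True hH)"
    by (simp add: comp_ddT)
  also have "\<dots> = isum f"
    unfolding f_def[abs_def] by (simp add: dY_hH Bop_def comp_isum comp_cst_mult adp_neg)
  also have "\<dots> = f 0 + f 1 + (\<Sum>r\<in>{1..M}. f (2 * r))"
  proof (rule assemble)
    fix i assume "2 * M + 1 < i"
    then have "Suc (Suc w + b) \<le> 1 + i" using b1 by (simp add: M_def)
    then show "f i = 0" unfolding f_def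
      by (simp add: comp_vanish[OF ordge_mono[OF oa]])
  next
    show "summ f" unfolding summ_def f_def
      by (intro allI ordge_cst_mult ordge_comp ordge_mono[OF oa]) simp
  next
    fix r assume "r \<in> {1..M}"
    then have "odd (2 * r + 1)" "2 * r + 1 \<ge> 3" by auto
    then show "f (2 * r + 1) = 0" by (simp add: f_def bern_odd)
  qed
  also have "f 0 = 0" by (simp add: f_def comp_xY)
  also have "f 1 = cst (-1/2) * ad xY (cmp (w + 1) (b - 1) hH)"
    using comp_adp_Y[OF b1, of w 1]
    by (simp add: f_def TT_Suc0 bern_Suc0 ad_anti[of "cmp (Suc w) (b - Suc 0) hH"] cst_uminus)
  also have "(\<Sum>r\<in>{1..M}. f (2 * r)) =
      (\<Sum>r\<in>{1..w+b}. cst (bernoulli (2*r) / fact (2*r)) * (\<Sum>ps\<in>tuples r (w + 1) (b - 1). nst ps xY))"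
    using b1 by (simp add: f_def M_def comp_adp_Y TT_tuples)
  finally show ?thesis by simp
qed


lemma coef_cst_fun: "coef (cst c * x) = ncsmult c (coef x)"
  by (simp add: fun_eq_iff ncsmult_def)

lemma coef_ad_fun: "coef (ad x y) = bracket (coef x) (coef y)"
  by (simp add: fun_eq_iff bracket_def ad_def coef_mult)

lemma coef_add_fun: "coef (x + y) = coef x + coef y"
  by (simp add: fun_eq_iff)

lemma sum_fun_apply: "(\<Sum>x\<in>A. g x) u = (\<Sum>x\<in>A. (g x u :: rat))"
  by (induction A rule: infinite_finite_induct) auto

lemma coef_sum_fun: "coef (sum f A) = (\<Sum>x\<in>A. coef (f x))"
  by (simp add: fun_eq_iff sum_fun_apply)

lemma cnt_F: "cnt False u = length (filter Not u)"
  unfolding cnt_def by (induction u) auto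
lemma cnt_T: "cnt True u = length (filter id u)"
  unfolding cnt_def by (induction u) auto

lemma coef_comp_hH: "coef (cmp w b hH) = H w b"
  by (simp add: fun_eq_iff coef_comp H_def hH_def cnt_F cnt_T)

lemma coef_nst: "coef (nst ps Z) = nested ps (coef Z)"
  by (induction ps) (simp_all add: nested_def coef_ad_fun coef_comp_hH)

lemma coef_xX': "coef xX = ncX" by (simp add: xX_def)
lemma coef_xY': "coef xY = ncY" by (simp add: xY_def)

theorem proposition5p4:
  shows "(\<forall>w b. w + b \<ge> 1 \<longrightarrow>
           ncsmult (of_nat (w + 1)) (H (w + 1) b) =
             ncsmult (1/2) (bracket ncX (H w b)) +
             (\<Sum>r\<in>{1..w+b}. ncsmult (bernoulli (2*r) / fact (2*r))
                 (\<Sum>ps\<in>tuples r w b. nested ps ncX))) \<and>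
         (\<forall>w b. b \<ge> 1 \<longrightarrow>
           ncsmult (of_nat b) (H (w + 1) b) =
             ncsmult (-1/2) (bracket ncY (H (w + 1) (b - 1))) +
             (\<Sum>r\<in>{1..w+b}. ncsmult (bernoulli (2*r) / fact (2*r))
                 (\<Sum>ps\<in>tuples r (w + 1) (b - 1). nested ps ncY)))"
proof (intro conjI allI impI)
  fix w b :: nat
  assume wb: "w + b \<ge> 1"
  have "coef (cst (of_nat (w + 1)) * cmp (w + 1) b hH) =
    coef (cst (1/2) * ad xX (cmp w b hH) +
    (\<Sum>r\<in>{1..w+b}. cst (bernoulli (2*r) / fact (2*r)) * (\<Sum>ps\<in>tuples r w b. nst ps xX)))"
    by (rule arg_cong[OF X_nc[OF wb]])
  then show "ncsmult (of_nat (w + 1)) (H (w + 1) b) =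
             ncsmult (1/2) (bracket ncX (H w b)) +
             (\<Sum>r\<in>{1..w+b}. ncsmult (bernoulli (2*r) / fact (2*r))
                 (\<Sum>ps\<in>tuples r w b. nested ps ncX))"
    by (simp only: coef_cst_fun coef_ad_fun coef_add_fun coef_sum_fun coef_comp_hH coef_nst coef_xX')
next
  fix w b :: nat
  assume b1: "b \<ge> 1"
  have "coef (cst (of_nat b) * cmp (w + 1) b hH) =
    coef (cst (-1/2) * ad xY (cmp (w + 1) (b - 1) hH) +
    (\<Sum>r\<in>{1..w+b}. cst (bernoulli (2*r) / fact (2*r)) * (\<Sum>ps\<in>tuples r (w + 1) (b - 1). nst ps xY)))"
    by (rule arg_cong[OF Y_nc[OF b1]])
  then show "ncsmult (of_nat b) (H (w + 1) b) =
             ncsmult (-1/2) (bracket ncY (H (w + 1) (b - 1))) +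
             (\<Sum>r\<in>{1..w+b}. ncsmult (bernoulli (2*r) / fact (2*r))
                 (\<Sum>ps\<in>tuples r (w + 1) (b - 1). nested ps ncY))"
    by (simp only: coef_cst_fun coef_ad_fun coef_add_fun coef_sum_fun coef_comp_hH coef_nst coef_xY')
qed


end
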